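(* Run WSU-UX with $K=2$ and any valid $(\eta,\gamma)$ on the two-phase loss sequence, and assume $\Pr(\mathcal E_2)>0$. Let $t_0=T_1+T_2+1$, let $1\le\tau\le T_3+T_4$ and $t=t_0+\tau$. Then $$\mathbb{E}[\pi_{t,2}\mid\mathcal E_2]\le\frac34\exp\Bigl(-\frac{\eta}{4}\tau\Bigr).$$
   Context: WSU-UX. Fix integers $K\ge 2$ and $T\ge 1$ and hyperparameters $\eta,\gamma$. The pair $(\eta,\gamma)$ is called valid if $\eta,\gamma\in(0,1/2)$ and $\eta K/\gamma\le 1/2$. Given a fixed loss sequence $\ell_t\in[0,1]^K$, WSU-UX sets $\pi_{1,i}=1/K$ and in each round $t$: forms $\tilde\pi_{t,i}=(1-\gamma)\pi_{t,i}+\gamma/K$; draws $I_t$ with $\Pr(I_t=i\mid\mathcal F_{t-1})=\tilde\pi_{t,i}$; sets $\hat\ell_{t,i}=\ell_{t,i}\mathbf 1[I_t=i]/\tilde\pi_{t,i}$; and updates $\pi_{t+1,i}=\pi_{t,i}\bigl(1-\eta(\hat\ell_{t,i}-\sum_{j}\pi_{t,j}\hat\ell_{t,j})\bigr)$; $\mathcal F_t$ is the history generated by $I_1,\dots,I_t$. Two-phase loss sequence ($K=2$, $T$ a multiple of $100$): with $T_1=\frac{T}{100}$, $\ell_{t,1}=1,\ell_{t,2}=0$ for $1\le t\le T_1$ and $\ell_{t,1}=0,\ell_{t,2}=1$ for $T_1<t\le T$. Further set $T_2=\frac{2}{10}T$, $T_3=\frac1{10}T$, $T_4=\frac{69}{100}T$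 (so $T_1+T_2+T_3+T_4=T$). $\mathcal E_2$ denotes the event $\{\pi_{T_1+T_2+1,1}\ge\frac14\}$. *)

theory Defs
  imports Complex_Main
begin

text \<open>Arms are indexed by 1..K, rounds by t = 1,2,...  A loss sequence is a function
  l :: nat => nat => real with l t i the loss of arm i at round t.
  A history is the list [I_1, ..., I_n] of drawn arms.\<close>

definition wsu_valid :: "nat \<Rightarrow> real \<Rightarrow> real \<Rightarrow> bool" where
  "wsu_valid K \<eta> \<gamma> \<longleftrightarrow> 0 < \<eta> \<and> \<eta> < 1/2 \<and> 0 < \<gamma> \<and> \<gamma> < 1/2 \<and> \<eta> * real K / \<gamma> \<le> 1/2"

definition wsu_tilde :: "nat \<Rightarrow> real \<Rightarrow> (nat \<Rightarrow> real) \<Rightarrow> nat \<Rightarrow> real" where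
  "wsu_tilde K \<gamma> p i = (1 - \<gamma>) * p i + \<gamma> / real K"

definition wsu_est :: "nat \<Rightarrow> real \<Rightarrow> (nat \<Rightarrow> real) \<Rightarrow> (nat \<Rightarrow> real) \<Rightarrow> nat \<Rightarrow> nat \<Rightarrow> real" where
  "wsu_est K \<gamma> lt p I i = (if i = I then lt i / wsu_tilde K \<gamma> p i else 0)"

definition wsu_update :: "nat \<Rightarrow> real \<Rightarrow> real \<Rightarrow> (nat \<Rightarrow> real) \<Rightarrow> (nat \<Rightarrow> real) \<Rightarrow> nat \<Rightarrow> (nat \<Rightarrow> real)" where
  "wsu_update K \<eta> \<gamma> lt p I = (\<lambda>i. p i * (1 - \<eta> * (wsu_est K \<gamma> lt p I i
        - (\<Sum>j\<in>{1..K}. p j * wsu_est K \<gamma> lt p I j))))"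

fun wsu_run :: "nat \<Rightarrow> real \<Rightarrow> real \<Rightarrow> (nat \<Rightarrow> nat \<Rightarrow> real) \<Rightarrow> nat \<Rightarrow> (nat \<Rightarrow> real) \<Rightarrow> nat list \<Rightarrow> (nat \<Rightarrow> real)" where
  "wsu_run K \<eta> \<gamma> l t p [] = p"
| "wsu_run K \<eta> \<gamma> l t p (I # hs) = wsu_run K \<eta> \<gamma> l (Suc t) (wsu_update K \<eta> \<gamma> (l t) p I) hs"

text \<open>wsu_pi K eta gamma l hs = pi_{n+1} when hs = [I_1,...,I_n]\<close>
definition wsu_pi :: "nat \<Rightarrow> real \<Rightarrow> real \<Rightarrow> (nat \<Rightarrow> nat \<Rightarrow> real) \<Rightarrow> nat list \<Rightarrow> nat \<Rightarrow> real" where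
  "wsu_pi K \<eta> \<gamma> l hs = wsu_run K \<eta> \<gamma> l 1 (\<lambda>_. 1 / real K) hs"

text \<open>probability of the history hs: product of Pr(I_t = hs_t | F_{t-1}) = tilde pi_{t, I_t}\<close>
definition wsu_hist_prob :: "nat \<Rightarrow> real \<Rightarrow> real \<Rightarrow> (nat \<Rightarrow> nat \<Rightarrow> real) \<Rightarrow> nat list \<Rightarrow> real" where
  "wsu_hist_prob K \<eta> \<gamma> l hs =
     (\<Prod>t<length hs. wsu_tilde K \<gamma> (wsu_pi K \<eta> \<gamma> l (take t hs)) (hs ! t))"

definition histories :: "nat \<Rightarrow> nat \<Rightarrow> nat list set" where
  "histories K n = {hs. set hs \<subseteq> {1..K} \<and> length hs = n}"

definition wsu_prob :: "nat \<Rightarrow> real \<Rightarrow> real \<Rightarrow> (nat \<Rightarrow> nat \<Rightarrow> real) \<Rightarrow> nat \<Rightarrow> (nat list \<Rightarrow> bool) \<Rightarrow> real" where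
  "wsu_prob K \<eta> \<gamma> l n E = (\<Sum>hs\<in>histories K n. if E hs then wsu_hist_prob K \<eta> \<gamma> l hs else 0)"

definition wsu_cond_exp :: "nat \<Rightarrow> real \<Rightarrow> real \<Rightarrow> (nat \<Rightarrow> nat \<Rightarrow> real) \<Rightarrow> nat \<Rightarrow> (nat list \<Rightarrow> real) \<Rightarrow> (nat list \<Rightarrow> bool) \<Rightarrow> real" where
  "wsu_cond_exp K \<eta> \<gamma> l n X E =
     (\<Sum>hs\<in>histories K n. if E hs then wsu_hist_prob K \<eta> \<gamma> l hs * X hs else 0) / wsu_prob K \<eta> \<gamma> l n E"

definition two_phase_loss :: "nat \<Rightarrow> nat \<Rightarrow> nat \<Rightarrow> real" where
  "two_phase_loss T t i = (if t \<le> T div 100 then (if i = 1 then 1 else 0) else (if i = 2 then 1 else 0))"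

end

theory Submission
  imports Defs
begin


lemma run_snoc: "wsu_run K \<eta> \<gamma> l t p (hs@[i]) = wsu_update K \<eta> \<gamma> (l (t + length hs)) (wsu_run K \<eta> \<gamma> l t p hs) i"
  by (induction hs arbitrary: t p) auto

lemma pi_snoc: "wsu_pi K \<eta> \<gamma> l (hs@[i]) = wsu_update K \<eta> \<gamma> (l (Suc (length hs))) (wsu_pi K \<eta> \<gamma> l hs) i"
  unfolding wsu_pi_def by (simp add: run_snoc)

lemma hist_prob_snoc: "wsu_hist_prob K \<eta> \<gamma> l (hs@[i]) = wsu_hist_prob K \<eta> \<gamma> l hs * wsu_tilde K \<gamma> (wsu_pi K \<eta> \<gamma> l hs) i"
proof -
  have "(\<Prod>t<length hs. wsu_tilde K \<gamma> (wsu_pi K \<eta> \<gamma> l (take t (hs@[i]))) ((hs@[i]) ! t))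
     = (\<Prod>t<length hs. wsu_tilde K \<gamma> (wsu_pi K \<eta> \<gamma> l (take t hs)) (hs ! t))"
    by (rule prod.cong) (auto simp: nth_append)
  then show ?thesis unfolding wsu_hist_prob_def by (simp add: prod.lessThan_Suc)
qed

lemma finite_hist: "finite (histories K n)"
  unfolding histories_def by (rule finite_lists_length_eq) simp

lemma hist_Suc: "histories K (Suc n) = (\<lambda>(hs,i). hs@[i]) ` (histories K n \<times> {1..K})"
proof
  show "histories K (Suc n) \<subseteq> (\<lambda>(hs,i). hs@[i]) ` (histories K n \<times> {1..K})"
  proof
    fix xs assume a: "xs \<in> histories K (Suc n)"
    then have "xs \<noteq> []" by (auto simp: histories_def)
    then obtain ys y where xs: "xs = ys @ [y]" by (metis rev_exhaust)
    with a show "xs \<in> (\<lambda>(hs,i). hs@[i]) ` (histories K n \<times> {1..K})"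
      by (auto simp: histories_def image_iff)
  qed
qed (auto simp: histories_def)

lemma sum_hist_Suc: "(\<Sum>hs\<in>histories K (Suc n). g hs) = (\<Sum>hs\<in>histories K n. \<Sum>i\<in>{1..K}. g (hs@[i]))"
proof -
  have inj: "inj_on (\<lambda>(hs,i). hs@[i]) (histories K n \<times> {1..K})"
    by (auto simp: inj_on_def)
  show ?thesis
    unfolding hist_Suc sum.reindex[OF inj]
    by (subst sum.cartesian_product) (simp add: case_prod_beta)
qed

definition inv2 :: "(nat \<Rightarrow> real) \<Rightarrow> bool" where
  "inv2 p \<longleftrightarrow> p 1 \<ge> 0 \<and> p 2 \<ge> 0 \<and> p 1 + p 2 = 1"

lemma two_set: "{1..2::nat} = {1,2}" by auto

lemma upd_inv:
  assumes v: "wsu_valid 2 \<eta> \<gamma>" and p: "inv2 p" and l1: "0 \<le> lt 1" "lt 1 \<le> 1" and l2: "0 \<le> lt 2" "lt 2 \<le> 1"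
    and I: "I \<in> {1,2}"
  shows "inv2 (wsu_update 2 \<eta> \<gamma> lt p I)"
proof -
  from v have e: "0 < \<eta>" "0 < \<gamma>" "\<gamma> < 1/2" "2*\<eta> \<le> \<gamma>/2"
    unfolding wsu_valid_def by (auto simp: field_simps)
  have t1: "wsu_tilde 2 \<gamma> p 1 \<ge> \<gamma>/2" and t2: "wsu_tilde 2 \<gamma> p 2 \<ge> \<gamma>/2"
    using p e unfolding inv2_def wsu_tilde_def by auto
  have key: "\<eta> * (x * L) / t \<le> 1/2" if "0 \<le> x" "x \<le> 1" "0 \<le> L" "L \<le> 1" "t \<ge> \<gamma>/2" for x L t
  proof -
    have "\<eta> * (x * L) \<le> \<eta>" using that e by (simp add: mult_le_one mult_left_le)
    also have "\<dots> \<le> t/2" using that e by linarith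
    finally show ?thesis using that e by (simp add: field_simps)
  qed
  have ps: "p (Suc 0) = 1 - p 2" using p unfolding inv2_def by simp
  show ?thesis
  proof (cases "I = 1")
    case True
    let ?t = "wsu_tilde 2 \<gamma> p 1"
    have tp: "?t > 0" using t1 e by linarith
    have k: "\<eta> * (p 2 * lt 1) / ?t \<le> 1/2" using key[of "p 2" "lt 1" ?t] p l1 t1 unfolding inv2_def by auto
    have nn: "0 \<le> \<eta> * p 1 * lt 1 / ?t" using p l1 tp e unfolding inv2_def by auto
    have u1: "wsu_update 2 \<eta> \<gamma> lt p I 1 = p 1 * (1 - \<eta> * (p 2 * lt 1) / ?t)"
      using True p tp unfolding wsu_update_def wsu_est_def inv2_def two_set
      by (simp add: field_simps; (simp add: algebra_simps flip: distrib_left)?; simp add: algebra_simps ps)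
    have u2: "wsu_update 2 \<eta> \<gamma> lt p I 2 = p 2 * (1 + \<eta> * p 1 * lt 1 / ?t)"
      using True p tp unfolding wsu_update_def wsu_est_def inv2_def two_set
      by (simp add: field_simps; (simp add: algebra_simps flip: distrib_left)?; simp add: algebra_simps ps)
    have a: "0 \<le> 1 - \<eta> * (p 2 * lt 1) / ?t" using k by linarith
    have b: "0 \<le> 1 + \<eta> * p 1 * lt 1 / ?t" using nn by linarith
    have c: "p 1 * (1 - \<eta> * (p 2 * lt 1) / ?t) + p 2 * (1 + \<eta> * p 1 * lt 1 / ?t) = p 1 + p 2"
      by (simp add: algebra_simps)
    show ?thesis unfolding inv2_def u1 u2 using p a b c unfolding inv2_def by simp
  next
    case False
    then have T: "I = 2" using I by auto
    let ?t = "wsu_tilde 2 \<gamma> p 2"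
    have tp: "?t > 0" using t2 e by linarith
    have k: "\<eta> * (p 1 * lt 2) / ?t \<le> 1/2" using key[of "p 1" "lt 2" ?t] p l2 t2 unfolding inv2_def by auto
    have nn: "0 \<le> \<eta> * p 2 * lt 2 / ?t" using p l2 tp e unfolding inv2_def by auto
    have u2: "wsu_update 2 \<eta> \<gamma> lt p I 2 = p 2 * (1 - \<eta> * (p 1 * lt 2) / ?t)"
      using T p tp unfolding wsu_update_def wsu_est_def inv2_def two_set
      by (simp add: field_simps; (simp add: algebra_simps flip: distrib_left)?; simp add: algebra_simps ps)
    have u1: "wsu_update 2 \<eta> \<gamma> lt p I 1 = p 1 * (1 + \<eta> * p 2 * lt 2 / ?t)"
      using T p tp unfolding wsu_update_def wsu_est_def inv2_def two_set
      by (simp add: field_simps; (simp add: algebra_simps flip: distrib_left)?; simp add: algebra_simps ps)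
    have a: "0 \<le> 1 - \<eta> * (p 1 * lt 2) / ?t" using k by linarith
    have b: "0 \<le> 1 + \<eta> * p 2 * lt 2 / ?t" using nn by linarith
    have c: "p 1 * (1 + \<eta> * p 2 * lt 2 / ?t) + p 2 * (1 - \<eta> * (p 1 * lt 2) / ?t) = p 1 + p 2"
      by (simp add: algebra_simps)
    show ?thesis unfolding inv2_def u1 u2 using p a b c unfolding inv2_def by simp
  qed
qed



lemma loss_bounds: "0 \<le> two_phase_loss T t i" "two_phase_loss T t i \<le> 1"
  unfolding two_phase_loss_def by auto

lemma loss_phase2: "T div 100 < t \<Longrightarrow> two_phase_loss T t 1 = 0 \<and> two_phase_loss T t 2 = 1"
  unfolding two_phase_loss_def by auto

lemma pi_inv:
  assumes v: "wsu_valid 2 \<eta> \<gamma>" and lb: "\<And>t i. 0 \<le> l t i \<and> l t i \<le> 1"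
  shows "set hs \<subseteq> {1,2} \<Longrightarrow> inv2 (wsu_pi 2 \<eta> \<gamma> l hs)"
proof (induction hs rule: rev_induct)
  case Nil
  then show ?case by (simp add: wsu_pi_def inv2_def)
next
  case (snoc x xs)
  then have iv: "inv2 (wsu_pi 2 \<eta> \<gamma> l xs)" and x: "x \<in> {1,2}" by auto
  show ?case unfolding pi_snoc
    by (rule upd_inv[OF v iv]) (use lb x in auto)
qed

lemma tilde_sum: "inv2 p \<Longrightarrow> (\<Sum>i\<in>{1..2}. wsu_tilde 2 \<gamma> p i) = 1"
  unfolding two_set wsu_tilde_def inv2_def
proof -
  assume "0 \<le> p 1 \<and> 0 \<le> p 2 \<and> p 1 + p 2 = 1"
  then have "p 1 + p 2 = 1" by simp
  have "(1 - \<gamma>) * p 1 + \<gamma> / real 2 + ((1 - \<gamma>) * p 2 + \<gamma> / real 2) = (1-\<gamma>) * (p 1 + p 2) + \<gamma>"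
    by (simp add: algebra_simps)
  then show "(\<Sum>i\<in>{1, 2}. (1 - \<gamma>) * p i + \<gamma> / real 2) = 1" using \<open>p 1 + p 2 = 1\<close> by simp
qed

lemma tilde_nonneg: "wsu_valid 2 \<eta> \<gamma> \<Longrightarrow> inv2 p \<Longrightarrow> i \<in> {1,2} \<Longrightarrow> 0 \<le> wsu_tilde 2 \<gamma> p i"
  unfolding wsu_tilde_def inv2_def wsu_valid_def by auto

lemma hist_nonneg:
  assumes v: "wsu_valid 2 \<eta> \<gamma>" and lb: "\<And>t i. 0 \<le> l t i \<and> l t i \<le> 1"
    and hs: "set hs \<subseteq> {1,2}"
  shows "0 \<le> wsu_hist_prob 2 \<eta> \<gamma> l hs"
  unfolding wsu_hist_prob_def
proof (rule prod_nonneg)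
  fix t assume t: "t \<in> {..<length hs}"
  have "set (take t hs) \<subseteq> {1,2}" using hs by (meson order_trans set_take_subset)
  then have iv: "inv2 (wsu_pi 2 \<eta> \<gamma> l (take t hs))" by (rule pi_inv[OF v lb])
  have "hs ! t \<in> {1,2}" proof -
    have "t < length hs" using t by simp
    then have "hs ! t \<in> set hs" by (rule nth_mem)
    then show ?thesis using hs by blast
  qed
  then show "0 \<le> wsu_tilde 2 \<gamma> (wsu_pi 2 \<eta> \<gamma> l (take t hs)) (hs ! t)"
    by (rule tilde_nonneg[OF v iv])
qed

lemma marg:
  assumes v: "wsu_valid 2 \<eta> \<gamma>" and lb: "\<And>t i. 0 \<le> l t i \<and> l t i \<le> 1"
  shows "(\<Sum>hs\<in>histories 2 (n+k). wsu_hist_prob 2 \<eta> \<gamma> l hs * X (take n hs))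
       = (\<Sum>hs\<in>histories 2 n. wsu_hist_prob 2 \<eta> \<gamma> l hs * X hs)"
proof (induction k)
  case 0
  have "take n hs = hs" if "hs \<in> histories 2 n" for hs using that by (simp add: histories_def)
  then show ?case by (intro sum.cong) auto
next
  case (Suc k)
  have "(\<Sum>hs\<in>histories 2 (n + Suc k). wsu_hist_prob 2 \<eta> \<gamma> l hs * X (take n hs))
     = (\<Sum>hs\<in>histories 2 (n+k). \<Sum>i\<in>{1..2}. wsu_hist_prob 2 \<eta> \<gamma> l (hs@[i]) * X (take n (hs@[i])))"
    by (simp add: sum_hist_Suc)
  also have "\<dots> = (\<Sum>hs\<in>histories 2 (n+k). wsu_hist_prob 2 \<eta> \<gamma> l hs * X (take n hs))"
  proof (rule sum.cong)
    fix hs assume hs: "hs \<in> histories 2 (n+k)"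
    then have tk: "take n (hs@[i]) = take n hs" for i by (simp add: histories_def)
    have "set hs \<subseteq> {1,2}" using hs by (auto simp: histories_def)
    then have iv: "inv2 (wsu_pi 2 \<eta> \<gamma> l hs)" by (rule pi_inv[OF v lb])
    have "(\<Sum>i\<in>{1..2}. wsu_hist_prob 2 \<eta> \<gamma> l (hs@[i]) * X (take n (hs@[i])))
        = wsu_hist_prob 2 \<eta> \<gamma> l hs * X (take n hs) * (\<Sum>i\<in>{1..2}. wsu_tilde 2 \<gamma> (wsu_pi 2 \<eta> \<gamma> l hs) i)"
      unfolding tk hist_prob_snoc sum_distrib_left by (simp add: algebra_simps)
    also have "\<dots> = wsu_hist_prob 2 \<eta> \<gamma> l hs * X (take n hs)" using tilde_sum[OF iv] by simp
    finally show "(\<Sum>i\<in>{1..2}. wsu_hist_prob 2 \<eta> \<gamma> l (hs@[i]) * X (take n (hs@[i])))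
        = wsu_hist_prob 2 \<eta> \<gamma> l hs * X (take n hs)" .
  qed simp
  finally show ?case using Suc by simp
qed

lemma phase2:
  assumes v: "wsu_valid 2 \<eta> \<gamma>" and p: "inv2 p" and l: "lt 1 = 0" "lt 2 = 1"
  shows "wsu_update 2 \<eta> \<gamma> lt p 1 2 = p 2"
    and "wsu_update 2 \<eta> \<gamma> lt p 2 2 = p 2 * (1 - \<eta> * p 1 / wsu_tilde 2 \<gamma> p 2)"
    and "wsu_update 2 \<eta> \<gamma> lt p 2 2 \<le> p 2"
    and "(\<Sum>i\<in>{1..2}. wsu_tilde 2 \<gamma> p i * wsu_update 2 \<eta> \<gamma> lt p i 2) = p 2 - \<eta> * p 1 * p 2"
proof -
  from v have e: "0 < \<eta>" "0 < \<gamma>" "\<gamma> < 1/2"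
    unfolding wsu_valid_def by auto
  let ?t = "wsu_tilde 2 \<gamma> p 2"
  have "(1-\<gamma>) * p 2 \<ge> 0" using p e unfolding inv2_def by simp
  then have tp: "?t > 0" using e unfolding wsu_tilde_def by simp
  have ps: "p (Suc 0) = 1 - p 2" using p unfolding inv2_def by simp
  show u1: "wsu_update 2 \<eta> \<gamma> lt p 1 2 = p 2"
    using l unfolding wsu_update_def wsu_est_def two_set by simp
  show u2: "wsu_update 2 \<eta> \<gamma> lt p 2 2 = p 2 * (1 - \<eta> * p 1 / ?t)"
  proof -
    have "wsu_update 2 \<eta> \<gamma> lt p 2 2 = p 2 * (1 - \<eta> * (1/?t - p 2 * (1/?t)))"
      using l unfolding wsu_update_def wsu_est_def two_set by simp
    moreover have "1/?t - p 2 * (1/?t) = p 1 / ?t" using ps tp by (simp add: field_simps)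
    ultimately show ?thesis by simp
  qed
  have "0 \<le> \<eta> * p 1 / ?t" using p e tp unfolding inv2_def by auto
  then show "wsu_update 2 \<eta> \<gamma> lt p 2 2 \<le> p 2" unfolding u2 using p unfolding inv2_def
    by (simp add: mult_left_le)
  have ts: "wsu_tilde 2 \<gamma> p 1 + ?t = 1" using tilde_sum[OF p] unfolding two_set by simp
  show "(\<Sum>i\<in>{1..2}. wsu_tilde 2 \<gamma> p i * wsu_update 2 \<eta> \<gamma> lt p i 2) = p 2 - \<eta> * p 1 * p 2"
  proof -
    have "?t*(p 2*(1 - \<eta>*p 1/?t)) = ?t*p 2 - \<eta>*p 1*p 2" using tp by (simp add: field_simps)
    then have "wsu_tilde 2 \<gamma> p 1 * p 2 + ?t*(p 2*(1 - \<eta>*p 1/?t)) = (wsu_tilde 2 \<gamma> p 1 + ?t) * p 2 - \<eta>*p 1*p 2"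
      by (simp add: algebra_simps)
    then show ?thesis unfolding two_set using u1 u2 ts by simp
  qed
qed

lemma mono2:
  assumes v: "wsu_valid 2 \<eta> \<gamma>" and len: "T div 100 \<le> length hs"
  shows "set (hs@ys) \<subseteq> {1,2} \<Longrightarrow> wsu_pi 2 \<eta> \<gamma> (two_phase_loss T) (hs@ys) 2 \<le> wsu_pi 2 \<eta> \<gamma> (two_phase_loss T) hs 2"
proof (induction ys rule: rev_induct)
  case Nil
  then show ?case by simp
next
  case (snoc y ys)
  let ?p = "wsu_pi 2 \<eta> \<gamma> (two_phase_loss T) (hs@ys)"
  have iv: "inv2 ?p" using snoc.prems by (intro pi_inv[OF v] conjI loss_bounds) auto
  have lp: "two_phase_loss T (Suc (length (hs@ys))) 1 = 0 \<and> two_phase_loss T (Suc (length (hs@ys))) 2 = 1"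
    using len by (intro loss_phase2) simp
  have y: "y = 1 \<or> y = 2" using snoc.prems by auto
  have "wsu_pi 2 \<eta> \<gamma> (two_phase_loss T) ((hs@ys)@[y]) 2 \<le> ?p 2"
    unfolding pi_snoc using y phase2(1,3)[OF v iv] lp by auto
  then show ?case using snoc by auto
qed



theorem mainTheorem18:
  fixes T \<tau> :: nat and \<eta> \<gamma> :: real
  defines "T1 \<equiv> T div 100" and "T2 \<equiv> 2 * T div 10" and "T3 \<equiv> T div 10" and "T4 \<equiv> 69 * T div 100"
  defines "l \<equiv> two_phase_loss T"
  defines "E2 \<equiv> (\<lambda>hs. wsu_pi 2 \<eta> \<gamma> l (take (T1 + T2) hs) 1 \<ge> 1/4)"
  assumes "T \<ge> 1" and "100 dvd T"
    and "wsu_valid 2 \<eta> \<gamma>"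
    and "wsu_prob 2 \<eta> \<gamma> l T E2 > 0"
    and "1 \<le> \<tau>" and "\<tau> \<le> T3 + T4"
  shows "wsu_cond_exp 2 \<eta> \<gamma> l T (\<lambda>hs. wsu_pi 2 \<eta> \<gamma> l (take (T1 + T2 + 1 + \<tau> - 1) hs) 2) E2
           \<le> 3/4 * exp (- (\<eta> / 4) * real \<tau>)"
proof -
  note v = assms(9)
  have lb: "\<And>t i. 0 \<le> l t i \<and> l t i \<le> 1" unfolding l_def using loss_bounds by auto
  have e: "0 < \<eta>" "\<eta> < 1/2" using v unfolding wsu_valid_def by auto
  obtain c where c: "T = 100 * c" using assms(8) by blast
  define n0 where "n0 = T1 + T2"
  define m where "m = n0 + \<tau>"
  have n0c: "n0 = 21 * c" unfolding n0_def T1_def T2_def c by simp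
  have T1n0: "T div 100 \<le> n0" unfolding n0c c by simp
  have mT: "m \<le> T" using assms(12) unfolding m_def n0c T3_def T4_def c by simp
  have n0m: "n0 \<le> m" unfolding m_def by simp
  have tk: "take (T1 + T2 + 1 + \<tau> - 1) hs = take m hs" for hs :: "nat list"
    unfolding m_def n0_def by simp
  let ?P = "wsu_pi 2 \<eta> \<gamma> l"
  let ?H = "wsu_hist_prob 2 \<eta> \<gamma> l"
  define Z where "Z h = (if ?P (take n0 h) 1 \<ge> 1/4 then ?P h 2 else 0)" for h
  define W where "W h = (if ?P h 1 \<ge> 1/4 then 1 else (0::real))" for h
  define D where "D = (\<Sum>h\<in>histories 2 n0. ?H h * W h)"
  have hset: "set h \<subseteq> {1,2}" if "h \<in> histories 2 k" for h k
    using that unfolding histories_def by auto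
  have hlen: "length h = k" if "h \<in> histories 2 k" for h k
    using that unfolding histories_def by auto
  have num: "(\<Sum>hs\<in>histories 2 T. if E2 hs then ?H hs * ?P (take (T1 + T2 + 1 + \<tau> - 1) hs) 2 else 0)
      = (\<Sum>h\<in>histories 2 m. ?H h * Z h)"
  proof -
    have "(\<Sum>hs\<in>histories 2 T. if E2 hs then ?H hs * ?P (take (T1 + T2 + 1 + \<tau> - 1) hs) 2 else 0)
        = (\<Sum>hs\<in>histories 2 (m + (T - m)). ?H hs * Z (take m hs))"
      using mT n0m unfolding tk E2_def Z_def n0_def[symmetric]
      by (intro sum.cong) (auto simp: min_def m_def)
    also have "\<dots> = (\<Sum>h\<in>histories 2 m. ?H h * Z h)" by (rule marg[OF v lb])
    finally show ?thesis .
  qed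
  have den: "wsu_prob 2 \<eta> \<gamma> l T E2 = D"
  proof -
    have "wsu_prob 2 \<eta> \<gamma> l T E2 = (\<Sum>hs\<in>histories 2 (n0 + (T - n0)). ?H hs * W (take n0 hs))"
      using mT n0m unfolding wsu_prob_def E2_def W_def n0_def[symmetric]
      by (intro sum.cong) auto
    also have "\<dots> = D" unfolding D_def by (rule marg[OF v lb])
    finally show ?thesis .
  qed
  have Dpos: "D > 0" using assms(10) den by simp
  have small: "?P h 2 \<le> 3/4" if h: "h \<in> histories 2 (n0 + j)" and cnd: "?P (take n0 h) 1 \<ge> 1/4" for h j
  proof -
    have s: "set h \<subseteq> {1,2}" using hset[OF h] .
    have "set (take n0 h) \<subseteq> {1,2}" using s by (meson order_trans set_take_subset)
    then have iv: "inv2 (?P (take n0 h))" by (rule pi_inv[OF v lb])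
    have len: "T div 100 \<le> length (take n0 h)" using hlen[OF h] T1n0 by simp
    have "?P (take n0 h @ drop n0 h) 2 \<le> ?P (take n0 h) 2"
      unfolding l_def by (rule mono2[OF v len]) (use s in simp)
    then show ?thesis using iv cnd unfolding inv2_def by simp
  qed
  have claim: "(\<Sum>h\<in>histories 2 (n0 + j). ?H h * Z h) \<le> 3/4 * (1 - \<eta>/4)^j * D" for j
  proof (induction j)
    case 0
    have "(\<Sum>h\<in>histories 2 n0. ?H h * Z h) \<le> (\<Sum>h\<in>histories 2 n0. 3/4 * (?H h * W h))"
    proof (rule sum_mono)
      fix h assume h: "h \<in> histories 2 n0"
      have Hn: "0 \<le> ?H h" by (rule hist_nonneg[OF v lb hset[OF h]])
      have tkh: "take n0 h = h" using hlen[OF h] by simp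
      have "Z h \<le> 3/4 * W h"
        using small[of h 0] h unfolding Z_def W_def tkh by auto
      then show "?H h * Z h \<le> 3/4 * (?H h * W h)" using Hn
        by (metis mult.left_commute mult_left_mono)
    qed
    then show ?case unfolding D_def by (simp add: sum_distrib_left)
  next
    case (Suc j)
    have "(\<Sum>h\<in>histories 2 (n0 + Suc j). ?H h * Z h)
        = (\<Sum>h\<in>histories 2 (n0 + j). \<Sum>i\<in>{1..2}. ?H (h@[i]) * Z (h@[i]))"
      by (simp add: sum_hist_Suc)
    also have "\<dots> \<le> (\<Sum>h\<in>histories 2 (n0 + j). (1 - \<eta>/4) * (?H h * Z h))"
    proof (rule sum_mono)
      fix h assume h: "h \<in> histories 2 (n0 + j)"
      have Hn: "0 \<le> ?H h" by (rule hist_nonneg[OF v lb hset[OF h]])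
      have iv: "inv2 (?P h)" by (rule pi_inv[OF v lb hset[OF h]])
      have tkh: "take n0 (h@[i]) = take n0 h" for i using hlen[OF h] by simp
      have lp: "l (Suc (length h)) 1 = 0 \<and> l (Suc (length h)) 2 = 1"
        unfolding l_def using hlen[OF h] T1n0 by (intro loss_phase2) simp
      show "(\<Sum>i\<in>{1..2}. ?H (h@[i]) * Z (h@[i])) \<le> (1 - \<eta>/4) * (?H h * Z h)"
      proof (cases "?P (take n0 h) 1 \<ge> 1/4")
        case True
        have sm: "?P h 2 \<le> 3/4" by (rule small[OF h True])
        have "(\<Sum>i\<in>{1..2}. ?H (h@[i]) * Z (h@[i]))
            = ?H h * (\<Sum>i\<in>{1..2}. wsu_tilde 2 \<gamma> (?P h) i * wsu_update 2 \<eta> \<gamma> (l (Suc (length h))) (?P h) i 2)"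
          unfolding Z_def tkh hist_prob_snoc pi_snoc using True
          by (simp add: sum_distrib_left mult.assoc)
        also have "\<dots> = ?H h * (?P h 2 - \<eta> * ?P h 1 * ?P h 2)"
          using phase2(4)[OF v iv] lp by simp
        also have "\<dots> \<le> ?H h * ((1 - \<eta>/4) * ?P h 2)"
        proof (rule mult_left_mono[OF _ Hn])
          have "?P h 1 \<ge> 1/4" using iv sm unfolding inv2_def by simp
          then have "\<eta> * (1/4) * ?P h 2 \<le> \<eta> * ?P h 1 * ?P h 2"
            using e iv unfolding inv2_def by (intro mult_right_mono mult_left_mono) auto
          then show "?P h 2 - \<eta> * ?P h 1 * ?P h 2 \<le> (1 - \<eta>/4) * ?P h 2"
            by (simp add: algebra_simps)
        qed
        also have "\<dots> = (1 - \<eta>/4) * (?H h * Z h)" unfolding Z_def using True by simp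
        finally show ?thesis .
      next
        case False
        then show ?thesis unfolding Z_def tkh by simp
      qed
    qed
    also have "\<dots> = (1 - \<eta>/4) * (\<Sum>h\<in>histories 2 (n0 + j). ?H h * Z h)"
      by (simp add: sum_distrib_left)
    also have "\<dots> \<le> (1 - \<eta>/4) * (3/4 * (1 - \<eta>/4)^j * D)"
      using Suc e by (intro mult_left_mono) auto
    also have "\<dots> = 3/4 * (1 - \<eta>/4)^(Suc j) * D" by simp
    finally show ?case .
  qed
  have "wsu_cond_exp 2 \<eta> \<gamma> l T (\<lambda>hs. ?P (take (T1 + T2 + 1 + \<tau> - 1) hs) 2) E2
      = (\<Sum>h\<in>histories 2 m. ?H h * Z h) / D"
    unfolding wsu_cond_exp_def num den by simp
  also have "\<dots> \<le> 3/4 * (1 - \<eta>/4)^\<tau>"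
    using claim[of \<tau>] Dpos unfolding m_def by (simp add: divide_le_eq)
  also have "\<dots> \<le> 3/4 * exp (- (\<eta> / 4)) ^ \<tau>"
  proof -
    have "(1 - \<eta>/4)^\<tau> \<le> exp (- (\<eta> / 4)) ^ \<tau>"
      using e exp_ge_add_one_self[of "- (\<eta>/4)"] by (intro power_mono) auto
    then show ?thesis by simp
  qed
  also have "\<dots> = 3/4 * exp (- (\<eta> / 4) * real \<tau>)"
    by (simp add: exp_of_nat_mult[symmetric] mult.commute)
  finally show ?thesis .
qed

end
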